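(* For all integers $n,m \geq 1$ with $n+m \geq 3$: ${\rm ML}^{\rm W}(K_{n,m})=0$ if $n \neq m$, and ${\rm ML}^{\rm W}(K_{n,m})=2n-2$ if $n=m \geq 2$.
   Context: $K_{n,m}$ is the complete bipartite graph with parts of sizes $n$ and $m$. A walk of a graph $G$ is a sequence of vertices $u_0u_1\dots u_p$ with $u_tu_{t+1}\in E(G)$ for all $t$ (vertices and edges may repeat); its length is $p$. For a walk $W$ of $G$, $G+W$ is the multigraph on $V(G)$ whose edge multiset consists of $E(G)$ together with each edge added as many times as $W$ traverses it. A multigraph is locally irregular if no two adjacent vertices have the same degree; a walk is irregularising if $G+W$ is locally irregular. ${\rm ML}^{\rm W}(G)$ denotes the minimum length of an irregularising walk of $G$, where the trivial walk consisting of a single vertex (length $0$) is allowed. *)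

theory Defs
  imports Main "HOL-Library.Extended_Nat"
begin

definition is_walk :: "'a set \<Rightarrow> ('a \<Rightarrow> 'a \<Rightarrow> bool) \<Rightarrow> 'a list \<Rightarrow> bool" where
  "is_walk V E W \<longleftrightarrow> W \<noteq> [] \<and> set W \<subseteq> V \<and>
     (\<forall>t. Suc t < length W \<longrightarrow> E (W ! t) (W ! Suc t))"

definition walk_length :: "'a list \<Rightarrow> nat" where
  "walk_length W = length W - 1"

definition walk_mult :: "'a list \<Rightarrow> 'a \<Rightarrow> 'a \<Rightarrow> nat" where
  "walk_mult W u v = card {t. Suc t < length W \<and>
      ((W ! t = u \<and> W ! Suc t = v) \<or> (W ! t = v \<and> W ! Suc t = u))}"

(* edge multiplicity of uv in the multigraph G + W *)
definition plus_mult :: "('a \<Rightarrow> 'a \<Rightarrow> bool) \<Rightarrow> 'a list \<Rightarrow> 'a \<Rightarrow> 'a \<Rightarrow> nat" where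
  "plus_mult E W u v = (if E u v then 1 else 0) + walk_mult W u v"

definition plus_deg :: "'a set \<Rightarrow> ('a \<Rightarrow> 'a \<Rightarrow> bool) \<Rightarrow> 'a list \<Rightarrow> 'a \<Rightarrow> nat" where
  "plus_deg V E W v = (\<Sum>w\<in>V. plus_mult E W v w)"

definition locally_irregular_plus :: "'a set \<Rightarrow> ('a \<Rightarrow> 'a \<Rightarrow> bool) \<Rightarrow> 'a list \<Rightarrow> bool" where
  "locally_irregular_plus V E W \<longleftrightarrow>
     (\<forall>u\<in>V. \<forall>v\<in>V. plus_mult E W u v > 0 \<longrightarrow> plus_deg V E W u \<noteq> plus_deg V E W v)"

definition irregularising :: "'a set \<Rightarrow> ('a \<Rightarrow> 'a \<Rightarrow> bool) \<Rightarrow> 'a list \<Rightarrow> bool" where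
  "irregularising V E W \<longleftrightarrow> is_walk V E W \<and> locally_irregular_plus V E W"

(* ML^W(G): minimum length of an irregularising walk (infinity if none exists) *)
definition minlen_irr_walk :: "'a set \<Rightarrow> ('a \<Rightarrow> 'a \<Rightarrow> bool) \<Rightarrow> enat" where
  "minlen_irr_walk V E = Inf {enat (walk_length W) | W. irregularising V E W}"

(* complete bipartite graph K_{n,m}: parts Inl ` {..<n} and Inr ` {..<m} *)
definition KV :: "nat \<Rightarrow> nat \<Rightarrow> (nat + nat) set" where
  "KV n m = Inl ` {..<n} \<union> Inr ` {..<m}"

definition KE :: "nat \<Rightarrow> nat \<Rightarrow> (nat + nat) \<Rightarrow> (nat + nat) \<Rightarrow> bool" where
  "KE n m x y \<longleftrightarrow> x \<in> KV n m \<and> y \<in> KV n m \<and> isl x \<noteq> isl y"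

end

theory Submission
  imports Defs
begin

definition dW :: "'a list \<Rightarrow> 'a \<Rightarrow> nat" where
  "dW W v = (\<Sum>t<length W - 1. (if W!t = v then 1 else 0) + (if W!Suc t = v then 1 else 0))"

lemma card_as_sum: "card {t. Suc t < length W \<and> P t} = (\<Sum>t<length W - 1. if P t then 1 else 0)"
proof -
  have "{t. Suc t < length W \<and> P t} = {t\<in>{..<length W - 1}. P t}" by auto
  then show ?thesis by (simp add: sum.inter_filter[symmetric])
qed

lemma KE_sym: "KE n m u v \<Longrightarrow> KE n m v u" unfolding KE_def by auto

lemma walk_edge: "is_walk V E W \<Longrightarrow> Suc t < length W \<Longrightarrow> E (W!t) (W!Suc t)"
  unfolding is_walk_def by auto

lemma walk_in: "is_walk V E W \<Longrightarrow> t < length W \<Longrightarrow> W!t \<in> V"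
  unfolding is_walk_def by auto

lemma finite_KV: "finite (KV n m)" unfolding KV_def by auto

lemma other_side: "v \<in> KV n m \<Longrightarrow> (\<Sum>w\<in>KV n m. if KE n m v w then 1 else 0) = (if isl v then m else n)"
proof -
  assume v: "v \<in> KV n m"
  have "(\<Sum>w\<in>KV n m. if KE n m v w then 1 else 0) = card {w\<in>KV n m. KE n m v w}"
    using finite_KV by (simp add: sum.inter_filter[symmetric])
  also have "{w\<in>KV n m. KE n m v w} = (if isl v then Inr ` {..<m} else Inl ` {..<n})"
    using v unfolding KE_def KV_def by auto
  also have "card \<dots> = (if isl v then m else n)"
    by (simp add: card_image)
  finally show ?thesis .
qed

lemma plus_deg_K:
  assumes w: "is_walk (KV n m) (KE n m) W" and v: "v \<in> KV n m"
  shows "plus_deg (KV n m) (KE n m) W v = (if isl v then m else n) + dW W v"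
proof -
  let ?V = "KV n m"
  have "plus_deg ?V (KE n m) W v = (\<Sum>w\<in>?V. if KE n m v w then 1 else 0) + (\<Sum>w\<in>?V. walk_mult W v w)"
    unfolding plus_deg_def plus_mult_def by (simp add: sum.distrib)
  moreover have "(\<Sum>w\<in>?V. walk_mult W v w) = dW W v"
  proof -
    have "(\<Sum>w\<in>?V. walk_mult W v w) = (\<Sum>w\<in>?V. \<Sum>t<length W - 1.
        if (W ! t = v \<and> W ! Suc t = w) \<or> (W ! t = w \<and> W ! Suc t = v) then 1 else 0)"
      unfolding walk_mult_def card_as_sum by simp
    also have "\<dots> = (\<Sum>t<length W - 1. \<Sum>w\<in>?V.
        if (W ! t = v \<and> W ! Suc t = w) \<or> (W ! t = w \<and> W ! Suc t = v) then 1 else 0)"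
      by (rule sum.swap)
    also have "\<dots> = dW W v" unfolding dW_def
    proof (rule sum.cong)
      fix t assume "t \<in> {..<length W - 1}"
      then have t: "Suc t < length W" by auto
      have e: "KE n m (W!t) (W!Suc t)" using walk_edge[OF w t] .
      then have ne: "W!t \<noteq> W!Suc t" unfolding KE_def by auto
      have i1: "W!t \<in> ?V" and i2: "W!Suc t \<in> ?V" using e unfolding KE_def by auto
      show "(\<Sum>w\<in>?V. if (W ! t = v \<and> W ! Suc t = w) \<or> (W ! t = w \<and> W ! Suc t = v) then 1 else 0) =
          (if W!t = v then 1 else 0) + (if W!Suc t = v then 1 else 0)"
      proof (cases "W!t = v")
        case True
        then have "\<And>w. ((W ! t = v \<and> W ! Suc t = w) \<or> (W ! t = w \<and> W ! Suc t = v)) = (w = W!Suc t)"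
          using ne by auto
        then show ?thesis using True ne i2 finite_KV by (simp add: sum.delta')
      next
        case False
        then have "\<And>w. ((W ! t = v \<and> W ! Suc t = w) \<or> (W ! t = w \<and> W ! Suc t = v)) = (w = W!t \<and> W!Suc t = v)"
          by auto
        then show ?thesis using False i1 finite_KV by (simp add: sum.delta')
      qed
    qed simp
    finally show ?thesis .
  qed
  ultimately show ?thesis using other_side[OF v] by simp
qed

lemma pm_pos_KE:
  assumes w: "is_walk (KV n m) (KE n m) W" and p: "plus_mult (KE n m) W u v > 0"
  shows "KE n m u v"
proof (cases "KE n m u v")
  case False
  then have "walk_mult W u v > 0" using p unfolding plus_mult_def by simp
  then have "{t. Suc t < length W \<and> ((W ! t = u \<and> W ! Suc t = v) \<or> (W ! t = v \<and> W ! Suc t = u))} \<noteq> {}"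
    unfolding walk_mult_def by (metis card.empty less_irrefl)
  then obtain t where "Suc t < length W" "(W ! t = u \<and> W ! Suc t = v) \<or> (W ! t = v \<and> W ! Suc t = u)" by auto
  then show ?thesis using walk_edge[OF w] KE_sym by metis
qed simp

lemma irr_K:
  assumes w: "is_walk (KV n m) (KE n m) W"
  shows "irregularising (KV n m) (KE n m) W \<longleftrightarrow>
     (\<forall>i<n. \<forall>j<m. m + dW W (Inl i) \<noteq> n + dW W (Inr j))"
proof
  assume "irregularising (KV n m) (KE n m) W"
  then have li: "locally_irregular_plus (KV n m) (KE n m) W" unfolding irregularising_def by simp
  show "\<forall>i<n. \<forall>j<m. m + dW W (Inl i) \<noteq> n + dW W (Inr j)"
  proof (intro allI impI)
    fix i j assume ij: "i < n" "j < m"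
    have in1: "Inl i \<in> KV n m" and in2: "Inr j \<in> KV n m" using ij unfolding KV_def by auto
    have "KE n m (Inl i) (Inr j)" using in1 in2 unfolding KE_def by simp
    then have "plus_mult (KE n m) W (Inl i) (Inr j) > 0" unfolding plus_mult_def by simp
    then have "plus_deg (KV n m) (KE n m) W (Inl i) \<noteq> plus_deg (KV n m) (KE n m) W (Inr j)"
      using li in1 in2 unfolding locally_irregular_plus_def by blast
    then show "m + dW W (Inl i) \<noteq> n + dW W (Inr j)"
      using plus_deg_K[OF w in1] plus_deg_K[OF w in2] by simp
  qed
next
  assume h: "\<forall>i<n. \<forall>j<m. m + dW W (Inl i) \<noteq> n + dW W (Inr j)"
  have "locally_irregular_plus (KV n m) (KE n m) W"
    unfolding locally_irregular_plus_def
  proof (intro ballI impI)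
    fix u v assume u: "u \<in> KV n m" and v: "v \<in> KV n m" and p: "plus_mult (KE n m) W u v > 0"
    have e: "KE n m u v" using pm_pos_KE[OF w p] .
    show "plus_deg (KV n m) (KE n m) W u \<noteq> plus_deg (KV n m) (KE n m) W v"
    proof (cases u)
      case (Inl i)
      then obtain j where "v = Inr j" using e unfolding KE_def by (cases v) auto
      then show ?thesis using Inl u v h plus_deg_K[OF w u] plus_deg_K[OF w v] unfolding KV_def by auto
    next
      case (Inr j)
      then obtain i where "v = Inl i" using e unfolding KE_def by (cases v) auto
      moreover have "i < n" "j < m" using Inr u v \<open>v = Inl i\<close> unfolding KV_def by auto
      ultimately have "m + dW W (Inl i) \<noteq> n + dW W (Inr j)" using h by blast
      then show ?thesis using Inr \<open>v = Inl i\<close> plus_deg_K[OF w u] plus_deg_K[OF w v] by simp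
    qed
  qed
  then show "irregularising (KV n m) (KE n m) W" using w unfolding irregularising_def by simp
qed


lemma dW_notin: "v \<notin> set W \<Longrightarrow> dW W v = 0"
  unfolding dW_def by (auto intro!: sum.neutral)

lemma dW_lower:
  assumes "v \<in> set W"
  shows "2 \<le> dW W v + (if hd W = v then 1 else 0) + (if last W = v then 1 else 0)"
proof -
  obtain i where i: "i < length W" "W!i = v" using assms by (meson in_set_conv_nth)
  let ?a = "\<lambda>t. (if W!t = v then 1 else 0) :: nat"
  let ?b = "\<lambda>t. (if W!Suc t = v then 1 else 0) :: nat"
  have d: "dW W v = sum ?a {..<length W - 1} + sum ?b {..<length W - 1}"
    unfolding dW_def by (simp add: sum.distrib)
  have A: "(if i < length W - 1 then 1 else 0) \<le> sum ?a {..<length W - 1}"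
  proof (cases "i < length W - 1")
    case True
    then have "?a i \<le> sum ?a {..<length W - 1}" by (intro member_le_sum) auto
    then show ?thesis using True i by simp
  qed simp
  have B: "(if 0 < i then 1 else 0) \<le> sum ?b {..<length W - 1}"
  proof (cases "0 < i")
    case True
    then have "?b (i - 1) \<le> sum ?b {..<length W - 1}" using i by (intro member_le_sum) auto
    then show ?thesis using True i by simp
  qed simp
  have h: "i = 0 \<Longrightarrow> hd W = v" using i by (simp add: hd_conv_nth)
  have l: "i = length W - 1 \<Longrightarrow> last W = v" using i by (metis last_conv_nth list.size(3) not_less0)
  show ?thesis using A B h l d i by (auto split: if_splits)
qed

lemma sum_dW_side:
  assumes fin: "finite S" and sub: "S \<subseteq> set W"
    and alt: "\<And>t. Suc t < length W \<Longrightarrow> (W!t \<in> S) \<noteq> (W!Suc t \<in> S)"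
  shows "2 * card S \<le> (length W - 1) + 2"
proof -
  have s1: "(\<Sum>v\<in>S. dW W v) = length W - 1"
  proof -
    have "(\<Sum>v\<in>S. dW W v) = (\<Sum>t<length W - 1. \<Sum>v\<in>S. (if W!t = v then 1 else 0) + (if W!Suc t = v then 1 else 0))"
      unfolding dW_def by (rule sum.swap)
    also have "\<dots> = (\<Sum>t<length W - 1. (1::nat))"
    proof (rule sum.cong)
      fix t assume "t \<in> {..<length W - 1}"
      then have "Suc t < length W" by auto
      from alt[OF this] show "(\<Sum>v\<in>S. (if W!t = v then 1 else 0) + (if W!Suc t = v then 1 else 0)) = (1::nat)"
        using fin by (simp add: sum.distrib sum.delta)
    qed simp
    finally show ?thesis by simp
  qed
  have "(\<Sum>v\<in>S. (2::nat)) \<le> (\<Sum>v\<in>S. dW W v + (if hd W = v then 1 else 0) + (if last W = v then 1 else 0))"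
    using sub by (intro sum_mono dW_lower) blast
  also have "\<dots> = (\<Sum>v\<in>S. dW W v) + (if hd W \<in> S then 1 else 0) + (if last W \<in> S then 1 else 0)"
    using fin by (simp add: sum.distrib sum.delta)
  also have "\<dots> \<le> (length W - 1) + 2" using s1 by simp
  finally show ?thesis by simp
qed

lemma lower_nn:
  assumes n: "n \<ge> 2" and irr: "irregularising (KV n n) (KE n n) W"
  shows "2 * n - 2 \<le> walk_length W"
proof -
  have w: "is_walk (KV n n) (KE n n) W" using irr unfolding irregularising_def by simp
  have c: "\<forall>i<n. \<forall>j<n. n + dW W (Inl i) \<noteq> n + dW W (Inr j)" using irr_K[OF w] irr by simp
  have side: "Inl ` {..<n} \<subseteq> set W \<or> Inr ` {..<n} \<subseteq> set W"
  proof (rule ccontr)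
    assume "\<not> ?thesis"
    then obtain i j where "i < n" "Inl i \<notin> set W" "j < n" "Inr j \<notin> set W" by auto
    then show False using c dW_notin by metis
  qed
  have kv: "\<And>x. x \<in> KV n n \<Longrightarrow> (x \<in> Inl ` {..<n}) = isl x" "\<And>x. x \<in> KV n n \<Longrightarrow> (x \<in> Inr ` {..<n}) = (\<not> isl x)"
    unfolding KV_def by auto
  have alt: "\<And>t. Suc t < length W \<Longrightarrow> isl (W!t) \<noteq> isl (W!Suc t) \<and> W!t \<in> KV n n \<and> W!Suc t \<in> KV n n"
    using walk_edge[OF w] unfolding KE_def by blast
  from side show ?thesis
  proof
    assume "Inl ` {..<n} \<subseteq> set W"
    from sum_dW_side[OF _ this] alt kv have "2 * card (Inl ` {..<n} :: (nat+nat) set) \<le> (length W - 1) + 2" by auto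
    then show ?thesis unfolding walk_length_def by (simp add: card_image)
  next
    assume "Inr ` {..<n} \<subseteq> set W"
    from sum_dW_side[OF _ this] alt kv have "2 * card (Inr ` {..<n} :: (nat+nat) set) \<le> (length W - 1) + 2" by auto
    then show ?thesis unfolding walk_length_def by (simp add: card_image)
  qed
qed


definition fw :: "nat \<Rightarrow> nat + nat" where
  "fw k = (if even k then Inl (k div 2) else Inr 0)"

lemma upper_nn:
  assumes n: "n \<ge> 2"
  shows "irregularising (KV n n) (KE n n) (map fw [0..<2*n-1])"
    and "walk_length (map fw [0..<2*n-1]) = 2*n-2"
proof -
  let ?W = "map fw [0..<2*n-1]"
  have len: "length ?W = 2*n-1" by simp
  have nth: "\<And>t. t < 2*n-1 \<Longrightarrow> ?W!t = fw t" by simp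
  have inV: "\<And>k. k < 2*n-1 \<Longrightarrow> fw k \<in> KV n n"
    unfolding fw_def KV_def using n by auto
  have w: "is_walk (KV n n) (KE n n) ?W"
    unfolding is_walk_def
  proof (intro conjI allI impI)
    show "?W \<noteq> []" using n by simp
    show "set ?W \<subseteq> KV n n" using inV by auto
    fix t assume t: "Suc t < length ?W"
    then show "KE n n (?W!t) (?W!Suc t)" using inV[of t] inV[of "Suc t"] unfolding KE_def
      by (simp add: fw_def)
  qed
  have dW_eq: "\<And>v. dW ?W v = (\<Sum>t<2*n-2. (if fw t = v then 1 else 0) + (if fw (Suc t) = v then 1 else 0))"
    unfolding dW_def by (rule sum.cong) (auto simp: nth)
  have dl: "\<And>i. i < n \<Longrightarrow> dW ?W (Inl i) = (if i < n - 1 then 1 else 0) + (if 0 < i then 1 else 0)"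
  proof -
    fix i assume i: "i < n"
    have e1: "\<And>t. (fw t = Inl i) = (t = 2*i)" unfolding fw_def by (simp; presburger)
    have e2: "\<And>t. (Suc t = 2*i) = (0 < i \<and> t = 2*i - 1)" by presburger
    have "dW ?W (Inl i) = (\<Sum>t<2*n-2. (if t = 2*i then 1 else 0)) + (\<Sum>t<2*n-2. (if 0 < i \<and> t = 2*i - 1 then 1 else 0))"
      unfolding dW_eq e1 e2 by (simp add: sum.distrib e1 e2)
    also have "\<dots> = (if i < n - 1 then 1 else 0) + (if 0 < i then 1 else 0)"
      using i by (simp add: sum.delta') arith
    finally show "dW ?W (Inl i) = (if i < n - 1 then 1 else 0) + (if 0 < i then 1 else 0)" .
  qed
  have dr0: "dW ?W (Inr 0) = 2*n-2"
  proof -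
    have "\<And>t. (if fw t = Inr 0 then 1 else 0) + (if fw (Suc t) = Inr 0 then 1 else 0) = (1::nat)"
      unfolding fw_def by auto
    then show ?thesis unfolding dW_eq by simp
  qed
  have dr: "\<And>j. 0 < j \<Longrightarrow> dW ?W (Inr j) = 0"
    unfolding dW_eq fw_def by simp
  show "irregularising (KV n n) (KE n n) ?W"
    unfolding irr_K[OF w]
  proof (intro allI impI)
    fix i j assume i: "i < n" and j: "j < n"
    show "n + dW ?W (Inl i) \<noteq> n + dW ?W (Inr j)"
    proof (cases "j = 0")
      case True
      then show ?thesis using dl[OF i] dr0 n i by auto
    next
      case False
      then show ?thesis using dl[OF i] dr n i by auto
    qed
  qed
  show "walk_length ?W = 2*n-2" unfolding walk_length_def by simp
qed

theorem theorem5p2: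
  fixes n m :: nat
  assumes "n \<ge> 1" and "m \<ge> 1" and "n + m \<ge> 3"
  shows "(n \<noteq> m \<longrightarrow> minlen_irr_walk (KV n m) (KE n m) = 0) \<and>
         (n = m \<and> n \<ge> 2 \<longrightarrow> minlen_irr_walk (KV n m) (KE n m) = enat (2 * n - 2))"
proof (intro conjI impI)
  assume nm: "n \<noteq> m"
  have v: "Inl 0 \<in> KV n m" using assms unfolding KV_def by auto
  have w: "is_walk (KV n m) (KE n m) [Inl 0]" using v unfolding is_walk_def by auto
  have irr: "irregularising (KV n m) (KE n m) [Inl 0]"
    unfolding irr_K[OF w] using nm by (simp add: dW_def)
  have "enat (walk_length [Inl (0::nat) :: nat + nat]) \<in> {enat (walk_length W) | W. irregularising (KV n m) (KE n m) W}"
    using irr by blast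
  then have "minlen_irr_walk (KV n m) (KE n m) \<le> enat (walk_length [Inl (0::nat) :: nat + nat])"
    unfolding minlen_irr_walk_def by (rule Inf_lower)
  then have "minlen_irr_walk (KV n m) (KE n m) \<le> 0"
    by (simp add: walk_length_def zero_enat_def)
  then show "minlen_irr_walk (KV n m) (KE n m) = 0" by simp
next
  assume h: "n = m \<and> n \<ge> 2"
  then have mn: "m = n" and n: "n \<ge> 2" by auto
  have mem: "enat (2*n-2) \<in> {enat (walk_length W) | W. irregularising (KV n n) (KE n n) W}"
  proof -
    have "enat (walk_length (map fw [0..<2*n-1])) \<in> {enat (walk_length W) | W. irregularising (KV n n) (KE n n) W}"
      using upper_nn(1)[OF n] by blast
    then show ?thesis using upper_nn(2)[OF n] by simp
  qed
  have "minlen_irr_walk (KV n n) (KE n n) = enat (2*n-2)"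
    unfolding minlen_irr_walk_def
  proof (rule antisym)
    show "Inf {enat (walk_length W) | W. irregularising (KV n n) (KE n n) W} \<le> enat (2*n-2)"
      using mem by (rule Inf_lower)
    show "enat (2*n-2) \<le> Inf {enat (walk_length W) | W. irregularising (KV n n) (KE n n) W}"
      using lower_nn[OF n] by (auto intro!: Inf_greatest)
  qed
  then show "minlen_irr_walk (KV n m) (KE n m) = enat (2 * n - 2)" using mn by simp
qed

end
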